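(* Let $m\ge3$, $p\in[m]$, and let $\lambda_1,\lambda_2$ be $\mathbb{Z}_2$-characteristic maps over $P_m$ with $\lambda_1(p)=\lambda_2(p)=\mathbf a$. Then the D-J classes of $\lambda_1$ and $\lambda_2$ are $p$-adjacent if and only if $\lambda_2$ is obtained from $\lambda_1$ by replacing some (possibly none) of the $\mathbf b\mathbf c$-pieces of $\lambda_1$ by their inversions.
   Context: $P_m$ is the simplicial complex on $[m]$ with facets $\{i,i+1\}$ (mod $m$). Write $\mathbf a=(1,0)^T,\mathbf b=(0,1)^T,\mathbf c=(1,1)^T\in\mathbb{Z}_2^2$. A $\mathbb{Z}_2$-characteristic map over $P_m$ is a map $\lambda\colon[m]\to\{\mathbf a,\mathbf b,\mathbf c\}$ with $\lambda(i)\neq\lambda(i+1)$ for all $i$ (mod $m$), i.e. a cyclic word in $\mathbf a,\mathbf b,\mathbf c$ with no two cyclically consecutive equal letters; D-J equivalence means $\lambda'=\phi\circ\lambda$ for some $\phi\in GL(2,\mathbb{Z}_2)$ (equivalently, a permutation of the letters). The $\mathbf b\mathbf c$-pieces of $\lambda$ are the restrictions of $\lambda$ to the maximal cyclic intervals of consecutive vertices of $[m]\setminus\lambda^{-1}(\mathbf a)$; the inversion of a piece exchanges $\mathbf b$ and $\mathbf c$ on it. $p$-adjacency: for a simplicial complex $K$, the wedge $\mathrm{wed}_pK$ replaces vertex $p$ by $p_1,p_2$, its minimal non-faces being those of $K$ not containing $p$ and $(\tau\setminus\{p\})\cup\{p_1,p_2\}$ for minimal non-faces $\tau\ni p$; the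 link of $p_2$ (resp. $p_1$) is identified with $K$ via $p_1\mapsto p$ (resp. $p_2\mapsto p$). The projection of a characteristic map $\Lambda\colon V\to\mathbb{Z}_2^n$ at a vertex $v$ is $w\mapsto[\Lambda(w)]\in\mathbb{Z}_2^n/\langle\Lambda(v)\rangle$ on the link of $v$. Two D-J classes $\lambda_1,\lambda_2$ over $P_m$ are $p$-adjacent if some characteristic map $\Lambda$ over $\mathrm{wed}_pP_m$ (values in $\mathbb{Z}_2^3$, images of faces linearly independent) satisfies $\operatorname{proj}_{p_2}\Lambda\simeq\lambda_1$, $\operatorname{proj}_{p_1}\Lambda\simeq\lambda_2$. *)

theory Defs
  imports "HOL-Analysis.Analysis" "HOL-Library.Z2"
begin

definition va :: "bit^2" where "va = vector [1, 0]"
definition vb :: "bit^2" where "vb = vector [0, 1]"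
definition vc :: "bit^2" where "vc = vector [1, 1]"

(* The simplicial complex P_m on vertex set {0..<m} (vertex i of the paper
   = i-1 here), facets {i, i+1 mod m}; given as the set of all its faces. *)
definition Pm :: "nat \<Rightarrow> nat set set" where
  "Pm m = {\<sigma>. \<exists>i<m. \<sigma> \<subseteq> {i, Suc i mod m}}"

(* Z_2-characteristic map over P_m: cyclic word in a,b,c, no two cyclically
   consecutive letters equal *)
definition z2_char_map_Pm :: "nat \<Rightarrow> (nat \<Rightarrow> bit^2) \<Rightarrow> bool" where
  "z2_char_map_Pm m lam \<longleftrightarrow>
     (\<forall>i<m. lam i \<in> {va, vb, vc} \<and> lam i \<noteq> lam (Suc i mod m))"

definition min_nonfaces :: "'a set \<Rightarrow> 'a set set \<Rightarrow> 'a set set" where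
  "min_nonfaces V K = {\<tau>. \<tau> \<subseteq> V \<and> \<tau> \<notin> K \<and> (\<forall>v\<in>\<tau>. \<tau> - {v} \<in> K)}"

(* Wedge wed_p K: vertex p replaced by p1 = Inr False, p2 = Inr True;
   the other vertices v become Inl v. *)
definition wed_vertices :: "'a set \<Rightarrow> 'a \<Rightarrow> ('a + bool) set" where
  "wed_vertices V p = Inl ` (V - {p}) \<union> {Inr False, Inr True}"

definition wed_min_nonfaces :: "'a set \<Rightarrow> 'a set set \<Rightarrow> 'a \<Rightarrow> ('a + bool) set set" where
  "wed_min_nonfaces V K p =
     {Inl ` \<tau> | \<tau>. \<tau> \<in> min_nonfaces V K \<and> p \<notin> \<tau>} \<union>
     {Inl ` (\<tau> - {p}) \<union> {Inr False, Inr True} | \<tau>. \<tau> \<in> min_nonfaces V K \<and> p \<in> \<tau>}"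

definition wed :: "'a set \<Rightarrow> 'a set set \<Rightarrow> 'a \<Rightarrow> ('a + bool) set set" where
  "wed V K p = {\<sigma>. \<sigma> \<subseteq> wed_vertices V p \<and> (\<forall>\<tau>\<in>wed_min_nonfaces V K p. \<not> \<tau> \<subseteq> \<sigma>)}"

(* identification of K with the link of p2 (q = False: p \<mapsto> p1) resp. of p1
   (q = True: p \<mapsto> p2) *)
definition wed_link_id :: "'a \<Rightarrow> bool \<Rightarrow> 'a \<Rightarrow> 'a + bool" where
  "wed_link_id p q u = (if u = p then Inr q else Inl u)"

(* characteristic map: the images of every face are linearly independent over
   Z_2, i.e. no nonempty subfamily sums to 0 *)
definition is_char_map :: "'v set set \<Rightarrow> ('v \<Rightarrow> bit^'n) \<Rightarrow> bool" where
  "is_char_map K \<Lambda> \<longleftrightarrow> (\<forall>\<sigma>\<in>K. \<forall>T\<subseteq>\<sigma>. T \<noteq> {} \<longrightarrow> (\<Sum>x\<in>T. \<Lambda> x) \<noteq> 0)"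

(* proj_v \<Lambda> (on the link of v, identified with K's vertex set V via \<iota>) is
   D-J equivalent to lam: there is a linear isomorphism
   Z_2^3/<\<Lambda> v> \<rightarrow> Z_2^2 carrying [\<Lambda>(\<iota> u)] to lam u; equivalently a surjective
   Z_2-linear map Z_2^3 \<rightarrow> Z_2^2 with kernel exactly <\<Lambda> v> = {0, \<Lambda> v}.
   (Over Z_2, linearity = additivity.) *)
definition proj_DJ_equiv ::
  "('v \<Rightarrow> bit^3) \<Rightarrow> 'v \<Rightarrow> ('a \<Rightarrow> 'v) \<Rightarrow> 'a set \<Rightarrow> ('a \<Rightarrow> bit^2) \<Rightarrow> bool" where
  "proj_DJ_equiv \<Lambda> v \<iota> V lam \<longleftrightarrow>
     (\<exists>\<psi> :: bit^3 \<Rightarrow> bit^2.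
        (\<forall>x y. \<psi> (x + y) = \<psi> x + \<psi> y) \<and> surj \<psi> \<and>
        (\<forall>x. \<psi> x = 0 \<longleftrightarrow> x = 0 \<or> x = \<Lambda> v) \<and>
        (\<forall>u\<in>V. \<psi> (\<Lambda> (\<iota> u)) = lam u))"

definition p_adjacent :: "nat \<Rightarrow> nat \<Rightarrow> (nat \<Rightarrow> bit^2) \<Rightarrow> (nat \<Rightarrow> bit^2) \<Rightarrow> bool" where
  "p_adjacent m p l1 l2 \<longleftrightarrow>
     (\<exists>\<Lambda> :: nat + bool \<Rightarrow> bit^3.
        is_char_map (wed {0..<m} (Pm m) p) \<Lambda> \<and>
        proj_DJ_equiv \<Lambda> (Inr True) (wed_link_id p False) {0..<m} l1 \<and>
        proj_DJ_equiv \<Lambda> (Inr False) (wed_link_id p True) {0..<m} l2)"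

definition cyc_interval :: "nat \<Rightarrow> nat set \<Rightarrow> bool" where
  "cyc_interval m I \<longleftrightarrow> (\<exists>s<m. \<exists>l. 1 \<le> l \<and> l \<le> m \<and> I = {(s + k) mod m | k. k < l})"

definition bc_pieces :: "nat \<Rightarrow> (nat \<Rightarrow> bit^2) \<Rightarrow> nat set set" where
  "bc_pieces m lam = {I. cyc_interval m I \<and> (\<forall>u\<in>I. lam u \<noteq> va) \<and>
      (\<forall>J. cyc_interval m J \<and> (\<forall>u\<in>J. lam u \<noteq> va) \<and> I \<subseteq> J \<longrightarrow> J = I)}"

definition bc_inv :: "bit^2 \<Rightarrow> bit^2" where
  "bc_inv x = (if x = vb then vc else if x = vc then vb else x)"

end

theory Submission
  imports Defs
begin

lemma vabc_comp [simp]: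
  "va$1 = 1" "va$2 = 0" "vb$1 = 0" "vb$2 = 1" "vc$1 = 1" "vc$2 = 1"
  by (simp_all add: va_def vb_def vc_def)

lemma vec2_eq: "(x::bit^2) = y \<longleftrightarrow> x$1 = y$1 \<and> x$2 = y$2"
  by (auto simp: vec_eq_iff forall_2)

lemma vec3_eq: "(x::bit^3) = y \<longleftrightarrow> x$1 = y$1 \<and> x$2 = y$2 \<and> x$3 = y$3"
  by (auto simp: vec_eq_iff forall_3)

lemma vabc_distinct [simp]: "va \<noteq> vb" "va \<noteq> vc" "vb \<noteq> vc" "vb \<noteq> va" "vc \<noteq> va" "vc \<noteq> vb"
  "va \<noteq> 0" "vb \<noteq> 0" "vc \<noteq> 0"
  by (simp_all add: vec2_eq)

lemma add_self_vec [simp]: "(x::bit^'n) + x = 0"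
  by (simp add: vec_eq_iff)

lemma add_eq0_iff: "(x::bit^'n) + y = 0 \<longleftrightarrow> x = y"
proof
  assume "x + y = 0" then have "x + y + y = y" by simp
  then show "x = y" by (simp add: add.assoc)
qed simp

lemma exists_minnf:
  "finite \<sigma> \<Longrightarrow> \<sigma> \<subseteq> V \<Longrightarrow> \<sigma> \<notin> K \<Longrightarrow> \<exists>\<tau>\<subseteq>\<sigma>. \<tau> \<in> min_nonfaces V K"
proof (induction "card \<sigma>" arbitrary: \<sigma> rule: less_induct)
  case less
  show ?case
  proof (cases "\<forall>v\<in>\<sigma>. \<sigma> - {v} \<in> K")
    case True
    then have "\<sigma> \<in> min_nonfaces V K" using less.prems unfolding min_nonfaces_def by simp
    then show ?thesis by blast
  next
    case False
    then obtain v where v: "v\<in>\<sigma>" "\<sigma> - {v} \<notin> K" by blast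
    have c: "card (\<sigma>-{v}) < card \<sigma>" using card_Diff1_less[OF less.prems(1) v(1)] .
    have f: "finite (\<sigma>-{v})" using less.prems(1) by simp
    have s: "\<sigma>-{v} \<subseteq> V" using less.prems(2) by auto
    obtain \<tau> where t: "\<tau> \<subseteq> \<sigma>-{v}" "\<tau> \<in> min_nonfaces V K"
      using less.hyps[OF c f s v(2)] by auto
    have "\<tau> \<subseteq> \<sigma>" using t(1) by auto
    then show ?thesis using t(2) by auto
  qed
qed

lemma Pm_sub: "A \<in> Pm m \<Longrightarrow> B \<subseteq> A \<Longrightarrow> B \<in> Pm m"
proof -
  assume "A \<in> Pm m" "B \<subseteq> A"
  then obtain i where "i < m" "A \<subseteq> {i, Suc i mod m}" unfolding Pm_def by blast
  then have "i < m \<and> B \<subseteq> {i, Suc i mod m}" using \<open>B \<subseteq> A\<close> by blast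
  then show ?thesis unfolding Pm_def by blast
qed

lemma Pm_single: "u < m \<Longrightarrow> {u} \<in> Pm m" unfolding Pm_def by (intro CollectI exI[of _ u]) simp

lemma wed_vertices_finite: "finite (wed_vertices {0..<(m::nat)} p)"
  unfolding wed_vertices_def by auto

lemma wed_D1: "T \<in> wed V K p \<Longrightarrow> T \<subseteq> wed_vertices V p"
  by (simp add: wed_def)

lemma wed_D2: "T \<in> wed V K p \<Longrightarrow> \<tau> \<in> wed_min_nonfaces V K p \<Longrightarrow> \<not> \<tau> \<subseteq> T"
  by (simp add: wed_def)

lemma wmn1: "\<tau> \<in> min_nonfaces V K \<Longrightarrow> p \<notin> \<tau> \<Longrightarrow> Inl ` \<tau> \<in> wed_min_nonfaces V K p"
  unfolding wed_min_nonfaces_def by (intro UnI1 CollectI exI[of _ \<tau>]) simp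

lemma wmn2: "\<tau> \<in> min_nonfaces V K \<Longrightarrow> p \<in> \<tau> \<Longrightarrow>
   Inl ` (\<tau> - {p}) \<union> {Inr False, Inr True} \<in> wed_min_nonfaces V K p"
  unfolding wed_min_nonfaces_def by (intro UnI2 CollectI exI[of _ \<tau>]) simp

lemma wed_L:
  assumes T: "T \<in> wed {0..<m} (Pm m) p"
  shows "{u. Inl u \<in> T} \<in> Pm m"
proof (rule ccontr)
  let ?L = "{u. Inl u \<in> T}"
  assume nL: "?L \<notin> Pm m"
  have Tv: "T \<subseteq> wed_vertices {0..<m} p" using wed_D1[OF T] .
  have sub: "?L \<subseteq> {0..<m} - {p}"
  proof
    fix u assume "u \<in> ?L"
    then have "Inl u \<in> wed_vertices {0..<m} p" using Tv by blast
    then show "u \<in> {0..<m} - {p}" unfolding wed_vertices_def by auto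
  qed
  have sub2: "?L \<subseteq> {0..<m}" using sub by blast
  have fin: "finite ?L" by (rule finite_subset[OF sub2]) simp
  obtain \<tau> where t: "\<tau> \<subseteq> ?L" "\<tau> \<in> min_nonfaces {0..<m} (Pm m)"
    using exists_minnf[OF fin sub2 nL] by blast
  have "p \<notin> \<tau>" using t(1) sub by blast
  then have "Inl ` \<tau> \<in> wed_min_nonfaces {0..<m} (Pm m) p" using wmn1[OF t(2)] by blast
  moreover have "Inl ` \<tau> \<subseteq> T" using t(1) by blast
  ultimately show False using wed_D2[OF T] by blast
qed

lemma wed_Lp:
  assumes T: "T \<in> wed {0..<m} (Pm m) p" and F: "Inr False \<in> T" and TT: "Inr True \<in> T" and pm: "p < m"
  shows "insert p {u. Inl u \<in> T} \<in> Pm m"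
proof (rule ccontr)
  let ?L = "insert p {u. Inl u \<in> T}"
  assume nL: "?L \<notin> Pm m"
  have Tv: "T \<subseteq> wed_vertices {0..<m} p" using wed_D1[OF T] .
  have sub2: "?L \<subseteq> {0..<m}"
  proof
    fix u assume "u \<in> ?L"
    then have "u = p \<or> Inl u \<in> T" by simp
    then show "u \<in> {0..<m}"
    proof
      assume "Inl u \<in> T"
      then have "Inl u \<in> wed_vertices {0..<m} p" using Tv by (rule subsetD[rotated])
      then show ?thesis unfolding wed_vertices_def by auto
    qed (use pm in simp)
  qed
  have fin: "finite ?L" by (rule finite_subset[OF sub2]) simp
  obtain \<tau> where t: "\<tau> \<subseteq> ?L" "\<tau> \<in> min_nonfaces {0..<m} (Pm m)"
    using exists_minnf[OF fin sub2 nL] by blast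
  show False
  proof (cases "p \<in> \<tau>")
    case True
    have "Inl ` (\<tau> - {p}) \<subseteq> T" using t(1) by auto
    then have "Inl ` (\<tau> - {p}) \<union> {Inr False, Inr True} \<subseteq> T" using F TT by simp
    then show False using wed_D2[OF T wmn2[OF t(2) True]] by blast
  next
    case False
    have "Inl ` \<tau> \<subseteq> T" using t(1) False by auto
    then show False using wed_D2[OF T wmn1[OF t(2) False]] by blast
  qed
qed

lemma edge_face:
  assumes "u < m" "u \<noteq> p"
  shows "{Inl u, Inr b} \<in> wed {0..<m} (Pm m) p"
  unfolding wed_def
proof (intro CollectI conjI ballI)
  show "{Inl u, Inr b} \<subseteq> wed_vertices {0..<m} p" using assms unfolding wed_vertices_def by auto
  fix \<tau>' assume "\<tau>' \<in> wed_min_nonfaces {0..<m} (Pm m) p"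
  then obtain \<tau> where t: "\<tau> \<in> min_nonfaces {0..<m} (Pm m)"
    "\<tau>' = Inl ` \<tau> \<or> \<tau>' = Inl ` (\<tau> - {p}) \<union> {Inr False, Inr True}"
    unfolding wed_min_nonfaces_def by blast
  show "\<not> \<tau>' \<subseteq> {Inl u, Inr b}"
  proof
    assume s: "\<tau>' \<subseteq> {Inl u, Inr b}"
    from t(2) show False
    proof
      assume "\<tau>' = Inl ` \<tau>"
      then have "\<tau> \<subseteq> {u}" using s by auto
      then have "\<tau> \<in> Pm m" using Pm_sub Pm_single assms by blast
      then show False using t(1) unfolding min_nonfaces_def by blast
    next
      assume "\<tau>' = Inl ` (\<tau> - {p}) \<union> {Inr False, Inr True}"
      then show False using s by (cases b) auto
    qed
  qed
qed

lemma sum_L_nonzero: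
  assumes "z2_char_map_Pm m l" "L \<in> Pm m" "L \<noteq> {}"
  shows "sum l L \<noteq> 0"
proof -
  obtain i where i: "i < m" "L \<subseteq> {i, Suc i mod m}" using assms(2) unfolding Pm_def by blast
  define j where "j = Suc i mod m"
  have j: "j < m" using i(1) unfolding j_def by simp
  have li: "l i \<in> {va,vb,vc}" "l i \<noteq> l j" using assms(1) i(1) unfolding z2_char_map_Pm_def j_def by auto
  have lj: "l j \<in> {va,vb,vc}" using assms(1) j unfolding z2_char_map_Pm_def by auto
  have "L = {i} \<or> L = {j} \<or> L = {i,j}" using i(2) assms(3) unfolding j_def[symmetric] by auto
  then show ?thesis
  proof (elim disjE)
    assume "L = {i,j}"
    moreover have "i \<noteq> j" using li by auto
    ultimately show ?thesis using li by (simp add: add_eq0_iff)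
  qed (use li lj in auto)
qed


lemma in_abc_comp2: "x \<in> {va,vb,vc} \<Longrightarrow> x \<noteq> va \<Longrightarrow> x $ 2 = 1"
  by auto

lemma if_dir:
  assumes m3: "m \<ge> 3" and pm: "p < m" and c1: "z2_char_map_Pm m l1" and c2: "z2_char_map_Pm m l2"
    and a1: "l1 p = va" and a2: "l2 p = va"
    and h2: "\<forall>u<m. l2 u $ 2 = l1 u $ 2"
  shows "p_adjacent m p l1 l2"
proof -
  define \<Lambda> :: "nat + bool \<Rightarrow> bit^3" where
    "\<Lambda> t = (case t of Inl u \<Rightarrow> vector [l1 u $ 1, l2 u $ 1, l1 u $ 2]
                 | Inr b \<Rightarrow> (if b then vector [0,1,0] else vector [1,0,0]))" for t
  define \<psi>1 :: "bit^3 \<Rightarrow> bit^2" where "\<psi>1 v = vector [v$1, v$3]" for v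
  define \<psi>2 :: "bit^3 \<Rightarrow> bit^2" where "\<psi>2 v = vector [v$2, v$3]" for v
  have add1: "\<psi>1 (x + y) = \<psi>1 x + \<psi>1 y" for x y unfolding \<psi>1_def by (simp add: vec2_eq)
  have add2: "\<psi>2 (x + y) = \<psi>2 x + \<psi>2 y" for x y unfolding \<psi>2_def by (simp add: vec2_eq)
  have z1: "\<psi>1 0 = 0" unfolding \<psi>1_def by (simp add: vec2_eq)
  have z2: "\<psi>2 0 = 0" unfolding \<psi>2_def by (simp add: vec2_eq)
  have P1: "\<psi>1 (\<Lambda> (Inl u)) = l1 u" for u unfolding \<psi>1_def \<Lambda>_def by (simp add: vec2_eq)
  have P2: "u < m \<Longrightarrow> \<psi>2 (\<Lambda> (Inl u)) = l2 u" for u unfolding \<psi>2_def \<Lambda>_def using h2 by (simp add: vec2_eq)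
  have P1T: "\<psi>1 (\<Lambda> (Inr True)) = 0" "\<psi>1 (\<Lambda> (Inr False)) = va"
    unfolding \<psi>1_def \<Lambda>_def by (simp_all add: vec2_eq)
  have P2T: "\<psi>2 (\<Lambda> (Inr False)) = 0" "\<psi>2 (\<Lambda> (Inr True)) = va"
    unfolding \<psi>2_def \<Lambda>_def by (simp_all add: vec2_eq)
  have sum1: "\<psi>1 (sum \<Lambda> T) = sum (\<psi>1 \<circ> \<Lambda>) T" for T
    using sum_comp_morphism[of \<psi>1 \<Lambda> T] z1 add1 by simp
  have sum2: "\<psi>2 (sum \<Lambda> T) = sum (\<psi>2 \<circ> \<Lambda>) T" for T
    using sum_comp_morphism[of \<psi>2 \<Lambda> T] z2 add2 by simp
  have face_nz: "sum \<Lambda> T \<noteq> 0" if T: "T \<in> wed {0..<m} (Pm m) p" "T \<noteq> {}" for T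
  proof -
    let ?L = "{u. Inl u \<in> T}"
    have Tv: "T \<subseteq> wed_vertices {0..<m} p" using T unfolding wed_def by blast
    have fT: "finite T" using Tv wed_vertices_finite finite_subset by blast
    have Lsub: "?L \<subseteq> {0..<m} - {p}" using Tv unfolding wed_vertices_def by auto
    have Tdec: "T = Inl ` ?L \<union> (T \<inter> {Inr False, Inr True})" using Tv unfolding wed_vertices_def by auto
    have LPm: "?L \<in> Pm m" using wed_L[OF T(1)] .
    show ?thesis
    proof (cases "Inr False \<in> T")
      case False
      have "sum (\<psi>1 \<circ> \<Lambda>) (Inl ` ?L) = sum (\<psi>1 \<circ> \<Lambda>) T"
        apply (rule sum.mono_neutral_left[OF fT])
        using Tdec False P1T by auto
      also have "sum (\<psi>1 \<circ> \<Lambda>) (Inl ` ?L) = sum l1 ?L"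
        by (simp add: sum.reindex P1)
      finally have e: "\<psi>1 (sum \<Lambda> T) = sum l1 ?L" using sum1 by simp
      show ?thesis
      proof (cases "?L = {}")
        case True
        then have "T \<subseteq> {Inr True}" using Tdec False by auto
          then have "T = {Inr True}" using T(2) by blast
        then show ?thesis unfolding \<Lambda>_def by (simp add: vec3_eq)
      next
        case False
        then show ?thesis using e sum_L_nonzero[OF c1 LPm] z1 by auto
      qed
    next
      case TF: True
      show ?thesis
      proof (cases "Inr True \<in> T")
        case False
        have "sum (\<psi>2 \<circ> \<Lambda>) (Inl ` ?L) = sum (\<psi>2 \<circ> \<Lambda>) T"
          apply (rule sum.mono_neutral_left[OF fT])
          using Tdec False P2T by auto
        also have "sum (\<psi>2 \<circ> \<Lambda>) (Inl ` ?L) = sum l2 ?L"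
          using Lsub by (simp add: sum.reindex, intro sum.cong) (auto simp: P2)
        finally have e: "\<psi>2 (sum \<Lambda> T) = sum l2 ?L" using sum2 by simp
        show ?thesis
        proof (cases "?L = {}")
          case True
          then have "T \<subseteq> {Inr False}" using Tdec False by auto
          then have "T = {Inr False}" using T(2) by blast
          then show ?thesis unfolding \<Lambda>_def by (simp add: vec3_eq)
        next
          case False
          then show ?thesis using e sum_L_nonzero[OF c2 LPm] z2 by auto
        qed
      next
        case TT: True
        have "insert p ?L \<in> Pm m" using wed_Lp[OF T(1) TF TT pm] .
        then obtain i where i: "i < m" "insert p ?L \<subseteq> {i, Suc i mod m}" unfolding Pm_def by blast
        define j where "j = Suc i mod m"
        have j: "j < m" using i(1) unfolding j_def by simp
        have lij: "l1 i \<noteq> l1 j" using c1 i(1) unfolding z2_char_map_Pm_def j_def by auto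
        have pL: "p \<notin> ?L" using Lsub by blast
        have "\<exists>u<m. ?L \<subseteq> {u} \<and> (?L \<noteq> {} \<longrightarrow> l1 u \<noteq> va)"
        proof (cases "p = i")
          case True
          then show ?thesis using i(2) pL j lij a1 unfolding j_def[symmetric] by auto
        next
          case False
          then have "p = j" using i(2) unfolding j_def by auto
          then show ?thesis using i pL lij a1 unfolding j_def[symmetric] by auto
        qed
        then obtain u where u: "u < m" "?L \<subseteq> {u}" "?L \<noteq> {} \<longrightarrow> l1 u \<noteq> va" by blast
        show ?thesis
        proof (cases "?L = {}")
          case True
          then have "T = {Inr False, Inr True}" using Tdec TF TT by auto
          then show ?thesis unfolding \<Lambda>_def by (simp add: vec3_eq)
        next
          case False
          then have "?L = {u}" using u by auto
          then have "T = {Inr False, Inr True, Inl u}" using Tdec TF TT by auto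
          moreover have "l1 u $ 2 = 1" using in_abc_comp2[of "l1 u"] u False c1
            unfolding z2_char_map_Pm_def by auto
          ultimately show ?thesis unfolding \<Lambda>_def by (simp add: vec3_eq)
        qed
      qed
    qed
  qed
  have char: "is_char_map (wed {0..<m} (Pm m) p) \<Lambda>"
    unfolding is_char_map_def
  proof (intro ballI allI impI)
    fix \<sigma> T assume s: "\<sigma> \<in> wed {0..<m} (Pm m) p" and "T \<subseteq> \<sigma>" "T \<noteq> {}"
    then have "T \<in> wed {0..<m} (Pm m) p" unfolding wed_def by blast
    then show "sum \<Lambda> T \<noteq> 0" using face_nz \<open>T \<noteq> {}\<close> by blast
  qed
  have proj1: "proj_DJ_equiv \<Lambda> (Inr True) (wed_link_id p False) {0..<m} l1"
    unfolding proj_DJ_equiv_def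
  proof (intro exI[of _ \<psi>1] conjI allI ballI)
    show "\<psi>1 (x + y) = \<psi>1 x + \<psi>1 y" for x y by (rule add1)
    show "surj \<psi>1"
    proof (rule surjI)
      fix z :: "bit^2" show "\<psi>1 (vector [z$1, 0, z$2]) = z" unfolding \<psi>1_def by (simp add: vec2_eq)
    qed
    show "(\<psi>1 x = 0) = (x = 0 \<or> x = \<Lambda> (Inr True))" for x
      unfolding \<psi>1_def \<Lambda>_def by (auto simp: vec2_eq vec3_eq)
    show "\<psi>1 (\<Lambda> (wed_link_id p False u)) = l1 u" if "u \<in> {0..<m}" for u
      unfolding wed_link_id_def using P1 P1T a1 by auto
  qed
  have proj2: "proj_DJ_equiv \<Lambda> (Inr False) (wed_link_id p True) {0..<m} l2"
    unfolding proj_DJ_equiv_def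
  proof (intro exI[of _ \<psi>2] conjI allI ballI)
    show "\<psi>2 (x + y) = \<psi>2 x + \<psi>2 y" for x y by (rule add2)
    show "surj \<psi>2"
    proof (rule surjI)
      fix z :: "bit^2" show "\<psi>2 (vector [0, z$1, z$2]) = z" unfolding \<psi>2_def by (simp add: vec2_eq)
    qed
    show "(\<psi>2 x = 0) = (x = 0 \<or> x = \<Lambda> (Inr False))" for x
      unfolding \<psi>2_def \<Lambda>_def by (auto simp: vec2_eq vec3_eq)
    show "\<psi>2 (\<Lambda> (wed_link_id p True u)) = l2 u" if "u \<in> {0..<m}" for u
      unfolding wed_link_id_def using P2 P2T a2 that by auto
  qed
  show ?thesis unfolding p_adjacent_def using char proj1 proj2 by blast
qed


lemma onlyif_a:
  assumes pm: "p < m" and a1: "l1 p = va" and a2: "l2 p = va"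
    and adj: "p_adjacent m p l1 l2" and u: "u < m"
  shows "l1 u = va \<longleftrightarrow> l2 u = va"
proof (cases "u = p")
  case True then show ?thesis using a1 a2 by simp
next
  case False
  obtain \<Lambda> :: "nat + bool \<Rightarrow> bit^3" where
    h0: "is_char_map (wed {0..<m} (Pm m) p) \<Lambda> \<and>
        proj_DJ_equiv \<Lambda> (Inr True) (wed_link_id p False) {0..<m} l1 \<and>
        proj_DJ_equiv \<Lambda> (Inr False) (wed_link_id p True) {0..<m} l2"
    using adj unfolding p_adjacent_def by (rule exE)
  have ch: "is_char_map (wed {0..<m} (Pm m) p) \<Lambda>" using h0 by (rule conjunct1)
  have pr1: "proj_DJ_equiv \<Lambda> (Inr True) (wed_link_id p False) {0..<m} l1" using h0 by simp
  have pr2: "proj_DJ_equiv \<Lambda> (Inr False) (wed_link_id p True) {0..<m} l2" using h0 by simp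
  obtain \<psi>1 :: "bit^3 \<Rightarrow> bit^2" where
    h1: "(\<forall>x y. \<psi>1 (x + y) = \<psi>1 x + \<psi>1 y) \<and> surj \<psi>1 \<and>
        (\<forall>x. \<psi>1 x = 0 \<longleftrightarrow> x = 0 \<or> x = \<Lambda> (Inr True)) \<and>
        (\<forall>v\<in>{0..<m}. \<psi>1 (\<Lambda> (wed_link_id p False v)) = l1 v)"
    using pr1 unfolding proj_DJ_equiv_def by (rule exE)
  have add1: "\<And>x y. \<psi>1 (x + y) = \<psi>1 x + \<psi>1 y" using h1 by simp
  have k1: "\<And>x. \<psi>1 x = 0 \<longleftrightarrow> x = 0 \<or> x = \<Lambda> (Inr True)" using h1 by simp
  have m1: "\<And>v. v \<in> {0..<m} \<Longrightarrow> \<psi>1 (\<Lambda> (wed_link_id p False v)) = l1 v" using h1 by simp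
  obtain \<psi>2 :: "bit^3 \<Rightarrow> bit^2" where
    h2: "(\<forall>x y. \<psi>2 (x + y) = \<psi>2 x + \<psi>2 y) \<and> surj \<psi>2 \<and>
        (\<forall>x. \<psi>2 x = 0 \<longleftrightarrow> x = 0 \<or> x = \<Lambda> (Inr False)) \<and>
        (\<forall>v\<in>{0..<m}. \<psi>2 (\<Lambda> (wed_link_id p True v)) = l2 v)"
    using pr2 unfolding proj_DJ_equiv_def by (rule exE)
  have add2: "\<And>x y. \<psi>2 (x + y) = \<psi>2 x + \<psi>2 y" using h2 by simp
  have k2: "\<And>x. \<psi>2 x = 0 \<longleftrightarrow> x = 0 \<or> x = \<Lambda> (Inr False)" using h2 by simp
  have m2: "\<And>v. v \<in> {0..<m} \<Longrightarrow> \<psi>2 (\<Lambda> (wed_link_id p True v)) = l2 v" using h2 by simp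
  define w where "w = \<Lambda> (Inl u)"
  define x where "x = \<Lambda> (Inr False)"
  define y where "y = \<Lambda> (Inr True)"
  have w1: "\<psi>1 w = l1 u" using m1[of u] u False unfolding w_def wed_link_id_def by auto
  have w2: "\<psi>2 w = l2 u" using m2[of u] u False unfolding w_def wed_link_id_def by auto
  have x1: "\<psi>1 x = va" using m1[of p] pm a1 unfolding x_def wed_link_id_def by auto
  have y2: "\<psi>2 y = va" using m2[of p] pm a2 unfolding y_def wed_link_id_def by auto
  have x2: "\<psi>2 x = 0" using k2[of x] unfolding x_def by simp
  have y1: "\<psi>1 y = 0" using k1[of y] unfolding y_def by simp
  have nz: "\<Lambda> (Inl u) + \<Lambda> (Inr b) \<noteq> 0" for b
  proof -
    have ch': "\<And>\<sigma> T. \<sigma> \<in> wed {0..<m} (Pm m) p \<Longrightarrow> T \<subseteq> \<sigma> \<Longrightarrow> T \<noteq> {} \<Longrightarrow> sum \<Lambda> T \<noteq> 0"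
      using ch unfolding is_char_map_def by blast
    have "sum \<Lambda> {Inl u, Inr b} \<noteq> 0"
      using ch'[OF edge_face[OF u False, of b] order_refl] by simp
    then show ?thesis by simp
  qed
  have wx: "w + x \<noteq> 0" and wy: "w + y \<noteq> 0" using nz unfolding w_def x_def y_def by auto
  show ?thesis
  proof
    assume "l1 u = va"
    then have "\<psi>1 (w + x) = 0" using add1 w1 x1 by simp
    then have "w + x = y" using k1[of "w + x"] wx unfolding y_def by simp
    then have "\<psi>2 (w + x) = va" using y2 by simp
    then show "l2 u = va" using add2 w2 x2 by simp
  next
    assume "l2 u = va"
    then have "\<psi>2 (w + y) = 0" using add2 w2 y2 by simp
    then have "w + y = x" using k2[of "w + y"] wy unfolding x_def by simp
    then have "\<psi>1 (w + y) = va" using x1 by simp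
    then show "l1 u = va" using add1 w1 y1 by simp
  qed
qed


lemma cyc_sub: "cyc_interval m I \<Longrightarrow> I \<subseteq> {0..<m}"
  unfolding cyc_interval_def by auto

lemma cyc_card: "cyc_interval m J \<Longrightarrow> card J \<le> m"
proof -
  assume "cyc_interval m J"
  then have "J \<subseteq> {0..<m}" by (rule cyc_sub)
  then have "card J \<le> card {0..<m}" by (rule card_mono[rotated]) simp
  then show ?thesis by simp
qed

lemma cyc_finite: "cyc_interval m J \<Longrightarrow> finite J"
proof -
  assume "cyc_interval m J"
  then have "J \<subseteq> {0..<m}" by (rule cyc_sub)
  then show ?thesis by (rule finite_subset) simp
qed

lemma cyc_single: "u < m \<Longrightarrow> cyc_interval m {u}"
proof -
  assume u: "u < m"
  have e: "{u} = {(u + k) mod m | k. k < (1::nat)}" using u by auto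
  show ?thesis unfolding cyc_interval_def
    by (rule exI[of _ u], rule conjI[OF u], rule exI[of _ 1]) (use u e in simp)
qed

lemma piece_exists:
  assumes u: "u < m" and nu: "l u \<noteq> va"
  shows "\<exists>I\<in>bc_pieces m l. u \<in> I"
proof -
  define P where "P n \<longleftrightarrow> (\<exists>J. cyc_interval m J \<and> (\<forall>v\<in>J. l v \<noteq> va) \<and> u \<in> J \<and> card J = n)" for n
  have "P 1" unfolding P_def
    by (rule exI[of _ "{u}"]) (simp add: cyc_single[OF u] nu)
  moreover have "\<forall>n. P n \<longrightarrow> n \<le> m"
  proof (intro allI impI)
    fix n assume "P n"
    then obtain J where "cyc_interval m J" "card J = n" unfolding P_def by auto
    then show "n \<le> m" using cyc_card by auto
  qed
  ultimately obtain n where n: "P n" "\<forall>k. P k \<longrightarrow> k \<le> n" using Nat.ex_has_greatest_nat[of P 1 m] by auto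
  then obtain I where I: "cyc_interval m I" "\<forall>v\<in>I. l v \<noteq> va" "u \<in> I" "card I = n"
    unfolding P_def by auto
  have "I \<in> bc_pieces m l"
    unfolding bc_pieces_def
  proof (intro CollectI conjI allI impI)
    fix J assume J: "cyc_interval m J \<and> (\<forall>u\<in>J. l u \<noteq> va) \<and> I \<subseteq> J"
    then have "P (card J)" unfolding P_def using I(3) by auto
    then have c: "card J \<le> card I" using n I(4) by auto
    have f: "finite J" using J cyc_finite by auto
    have "card I \<le> card J" using J f by (simp add: card_mono)
    then have "card I = card J" using c by simp
    then show "J = I" using card_subset_eq[OF f] J by auto
  qed (use I in auto)
  then show ?thesis using I(3) by auto
qed

lemma onlyif_comb:
  assumes c1: "z2_char_map_Pm m l1" and c2: "z2_char_map_Pm m l2"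
    and A: "\<forall>u<m. l1 u = va \<longleftrightarrow> l2 u = va"
  shows "\<exists>S \<subseteq> bc_pieces m l1.
       \<forall>u<m. l2 u = (if u \<in> \<Union>S then bc_inv (l1 u) else l1 u)"
proof -
  have consec: "(l2 u = l1 u) \<longleftrightarrow> (l2 (Suc u mod m) = l1 (Suc u mod m))"
    if "u < m" "l1 u \<noteq> va" "l1 (Suc u mod m) \<noteq> va" for u
  proof -
    have sm: "Suc u mod m < m" using that(1) by simp
    have "l1 u \<in> {va,vb,vc}" "l2 u \<in> {va,vb,vc}" "l1 u \<noteq> l1 (Suc u mod m)" "l2 u \<noteq> l2 (Suc u mod m)"
      using c1 c2 that(1) unfolding z2_char_map_Pm_def by auto
    moreover have "l1 (Suc u mod m) \<in> {va,vb,vc}" "l2 (Suc u mod m) \<in> {va,vb,vc}"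
      using c1 c2 sm unfolding z2_char_map_Pm_def by auto
    moreover have "l2 u \<noteq> va" "l2 (Suc u mod m) \<noteq> va" using A that sm by auto
    ultimately show ?thesis using that by auto
  qed
  have const: "(l2 v = l1 v) \<longleftrightarrow> (l2 w = l1 w)"
    if I: "cyc_interval m I" "\<forall>v\<in>I. l1 v \<noteq> va" and vw: "v \<in> I" "w \<in> I" for I v w
  proof -
    obtain s l where sl: "s < m" "I = {(s + k) mod m | k. k < l}" using I(1) unfolding cyc_interval_def by blast
    have "\<forall>k<l. (l2 ((s+k) mod m) = l1 ((s+k) mod m)) \<longleftrightarrow> (l2 (s mod m) = l1 (s mod m))"
    proof (intro allI)
      fix k show "k < l \<longrightarrow> ((l2 ((s+k) mod m) = l1 ((s+k) mod m)) \<longleftrightarrow> (l2 (s mod m) = l1 (s mod m)))"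
      proof (induction k)
        case 0 then show ?case by simp
      next
        case (Suc k)
        show ?case
        proof
          assume kl: "Suc k < l"
          have e: "Suc ((s+k) mod m) mod m = (s + Suc k) mod m" by (simp add: mod_Suc_eq)
          have i1: "(s+k) mod m \<in> I" "(s + Suc k) mod m \<in> I" using kl sl(2) by auto
          have "(s+k) mod m < m" using sl(1) by simp
          from consec[OF this] i1 I(2) e Suc.IH kl show "((l2 ((s+Suc k) mod m) = l1 ((s+Suc k) mod m)) \<longleftrightarrow> (l2 (s mod m) = l1 (s mod m)))"
            by auto
        qed
      qed
    qed
    then show ?thesis using vw sl(2) by auto
  qed
  define S where "S = {I \<in> bc_pieces m l1. \<exists>v\<in>I. l2 v \<noteq> l1 v}"
  have "\<forall>u<m. l2 u = (if u \<in> \<Union>S then bc_inv (l1 u) else l1 u)"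
  proof (intro allI impI)
    fix u assume u: "u < m"
    have abc: "l1 u \<in> {va,vb,vc}" "l2 u \<in> {va,vb,vc}" using c1 c2 u unfolding z2_char_map_Pm_def by auto
    show "l2 u = (if u \<in> \<Union>S then bc_inv (l1 u) else l1 u)"
    proof (cases "u \<in> \<Union>S")
      case True
      then obtain I v where I: "I \<in> bc_pieces m l1" "u \<in> I" "v \<in> I" "l2 v \<noteq> l1 v" unfolding S_def by blast
      have Ic: "cyc_interval m I" "\<forall>v\<in>I. l1 v \<noteq> va" using I(1) unfolding bc_pieces_def by auto
      have "l2 u \<noteq> l1 u" using const[OF Ic I(2) I(3)] I(4) by blast
      moreover have "l1 u \<noteq> va" using Ic I(2) by blast
      moreover have "l2 u \<noteq> va" using A u calculation(2) by blast
      ultimately show ?thesis using True abc by (auto simp: bc_inv_def)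
    next
      case False
      show ?thesis
      proof (cases "l1 u = va")
        case True
        then have "l2 u = va" using A u by blast
        then show ?thesis using False True by simp
      next
        case nv: False
        obtain I where I: "I \<in> bc_pieces m l1" "u \<in> I" using piece_exists[of u m l1, OF u nv] by blast
        have "I \<notin> S" using I False by blast
        then have "l2 u = l1 u" using I unfolding S_def by blast
        then show ?thesis using False by simp
      qed
    qed
  qed
  moreover have "S \<subseteq> bc_pieces m l1" unfolding S_def by blast
  ultimately show ?thesis by blast
qed

theorem mainTheorem3:
  fixes m p :: nat and l1 l2 :: "nat \<Rightarrow> bit^2"
  assumes "m \<ge> 3" and "p < m"
    and "z2_char_map_Pm m l1" and "z2_char_map_Pm m l2"
    and "l1 p = va" and "l2 p = va"
  shows "p_adjacent m p l1 l2 \<longleftrightarrow>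
    (\<exists>S \<subseteq> bc_pieces m l1.
       \<forall>u<m. l2 u = (if u \<in> \<Union>S then bc_inv (l1 u) else l1 u))"
proof
  assume "p_adjacent m p l1 l2"
  then have "\<forall>u<m. l1 u = va \<longleftrightarrow> l2 u = va" using onlyif_a assms(2,5,6) by blast
  then show "\<exists>S \<subseteq> bc_pieces m l1. \<forall>u<m. l2 u = (if u \<in> \<Union>S then bc_inv (l1 u) else l1 u)"
    using onlyif_comb assms(3,4) by blast
next
  assume "\<exists>S \<subseteq> bc_pieces m l1. \<forall>u<m. l2 u = (if u \<in> \<Union>S then bc_inv (l1 u) else l1 u)"
  then obtain S where S: "\<forall>u<m. l2 u = (if u \<in> \<Union>S then bc_inv (l1 u) else l1 u)" by blast
  have "\<forall>u<m. l2 u $ 2 = l1 u $ 2"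
  proof (intro allI impI)
    fix u assume "u < m"
    then show "l2 u $ 2 = l1 u $ 2" using S by (auto simp: bc_inv_def)
  qed
  then show "p_adjacent m p l1 l2" using if_dir assms by blast
qed

end
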